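(* Assume $p\in W^{1,\infty}((0,\infty)\times\mathbb{R})$ satisfies $p_*\mathbb{1}_{\{s>s_*\}}\le p(s,S)\le p_\infty$ for all $s\ge0$, $S\in\mathbb{R}$, for some constants $p_*,p_\infty,s_*>0$. Then the function $F:\mathbb{R}\to\mathbb{R}_+$ defined by $$F(S)=\left(\int_0^\infty e^{-\int_0^sp(\tau,S)\,d\tau}\,ds\right)^{-1}$$ is bounded and Lipschitz. *)

theory Defs
  imports "HOL-Analysis.Analysis"
begin

text \<open>W^{1,\<infinity>}(\<Omega>) on the convex open set \<Omega> = (0,\<infinity>) \<times> \<real>, identified with its
  (unique) Lipschitz continuous representative: a bounded, Lipschitz function on \<Omega>.\<close>
definition W1inf_on :: "(real \<times> real) set \<Rightarrow> (real \<Rightarrow> real \<Rightarrow> real) \<Rightarrow> bool" where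
  "W1inf_on \<Omega> p \<longleftrightarrow>
     bounded ((\<lambda>(s, S). p s S) ` \<Omega>) \<and> (\<exists>L. L-lipschitz_on \<Omega> (\<lambda>(s, S). p s S))"

definition Fmap :: "(real \<Rightarrow> real \<Rightarrow> real) \<Rightarrow> real \<Rightarrow> real" where
  "Fmap p S = inverse (integral {0..} (\<lambda>s. exp (- integral {0..s} (\<lambda>\<tau>. p \<tau> S))))"

end

theory Submission
  imports Defs
begin

lemma exp_diff_bound:
  fixes a b :: real
  shows "\<bar>exp (-a) - exp (-b)\<bar> \<le> exp (- min a b) * \<bar>a - b\<bar>"
proof -
  have key: "\<bar>exp (-a) - exp (-b)\<bar> \<le> exp (-a) * (b - a)" if "a \<le> b" for a b :: real
  proof -
    have "exp (-b) = exp (-a) * exp (a - b)" by (simp add: exp_add[symmetric])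
    moreover have "1 + (a - b) \<le> exp (a - b)" by (rule exp_ge_add_one_self)
    moreover have "exp (a - b) \<le> 1" using that by simp
    ultimately have "exp (-a) - exp (-b) = exp (-a) * (1 - exp (a - b))"
      and "0 \<le> 1 - exp (a - b)" "1 - exp (a - b) \<le> b - a"
      by (auto simp: algebra_simps)
    then show ?thesis
      by (simp add: mult_left_mono)
  qed
  show ?thesis
  proof (cases "a \<le> b")
    case True then show ?thesis using key[of a b] by (simp add: min_def)
  next
    case False then show ?thesis using key[of b a] by (simp add: min_def abs_minus_commute)
  qed
qed

lemma s_exp_bound:
  fixes c s :: real
  assumes "c > 0"
  shows "s * exp (- c * s) \<le> (2 / c) * exp (- (c/2) * s)"
proof -
  have "1 + c * s / 2 \<le> exp (c * s / 2)" by (rule exp_ge_add_one_self)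
  then have "s \<le> (2 / c) * exp (c * s / 2)" using assms
    by (simp add: field_simps)
  then have "s * exp (- c * s) \<le> (2 / c) * exp (c * s / 2) * exp (- c * s)"
    using mult_right_mono[OF \<open>s \<le> _\<close>, of "exp (- c * s)"] by simp
  also have "\<dots> = (2 / c) * exp (- (c/2) * s)"
    by (simp add: mult.assoc exp_add[symmetric])
  finally show ?thesis .
qed

theorem mainTheorem5:
  fixes p :: "real \<Rightarrow> real \<Rightarrow> real" and p_star p_inf s_star :: real
  assumes "W1inf_on ({0<..} \<times> UNIV) p"
    and "p_star > 0" and "p_inf > 0" and "s_star > 0"
    and "\<And>s S. s \<ge> 0 \<Longrightarrow> p_star * indicator {s_star<..} s \<le> p s S \<and> p s S \<le> p_inf"
  shows "bounded (range (Fmap p)) \<and> (\<exists>L. L-lipschitz_on UNIV (Fmap p))"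
proof -
  note ps = assms(2) and pinf = assms(3) and ss = assms(4)
  obtain L where Lp: "L-lipschitz_on ({0<..} \<times> UNIV) (\<lambda>(s, S). p s S)"
    using assms(1) unfolding W1inf_on_def by blast
  define M where "M = max L 0"
  have M0: "M \<ge> 0" by (simp add: M_def)
  have plip: "\<bar>p \<tau> S - p \<tau>' S'\<bar> \<le> M * dist (\<tau>, S) (\<tau>', S')"
    if "\<tau> > 0" "\<tau>' > 0" for \<tau> \<tau>' S S'
  proof -
    have "dist (p \<tau> S) (p \<tau>' S') \<le> L * dist (\<tau>, S) (\<tau>', S')"
      using lipschitz_onD[OF Lp, of "(\<tau>, S)" "(\<tau>', S')"] that by auto
    also have "\<dots> \<le> M * dist (\<tau>, S) (\<tau>', S')"
      by (rule mult_right_mono) (auto simp: M_def)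
    finally show ?thesis by (simp add: dist_real_def)
  qed
  have plipS: "\<bar>p \<tau> S - p \<tau> S'\<bar> \<le> M * \<bar>S - S'\<bar>" if "\<tau> > 0" for \<tau> S S'
    using plip[OF that that, of S S'] by (simp add: dist_Pair_Pair dist_real_def)
  have plipT: "\<bar>p \<tau> S - p \<tau>' S\<bar> \<le> M * \<bar>\<tau> - \<tau>'\<bar>" if "\<tau> > 0" "\<tau>' > 0" for \<tau> \<tau>' S
    using plip[OF that, of S S] by (simp add: dist_Pair_Pair dist_real_def)
  have pb: "0 \<le> p \<tau> S" "p \<tau> S \<le> p_inf" if "\<tau> \<ge> 0" for \<tau> S
    using assms(5)[OF that, of S] ps
    by (auto intro: order_trans[rotated] simp: indicator_def split: if_splits)
  have pb2: "p_star \<le> p \<tau> S" if "\<tau> > s_star" for \<tau> S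
    using assms(5)[of \<tau> S] that ss by (simp add: indicator_def)
  have pcont: "continuous_on {0<..} (\<lambda>\<tau>. p \<tau> S)" for S
  proof (rule lipschitz_on_continuous_on)
    show "M-lipschitz_on {0<..} (\<lambda>\<tau>. p \<tau> S)"
      by (rule lipschitz_onI) (use plipT M0 in \<open>auto simp: dist_real_def\<close>)
  qed
  have intp: "(\<lambda>\<tau>. p \<tau> S) integrable_on {0..s}" for S s
  proof -
    have neg: "negligible (({0..s} - {0<..s}) \<union> ({0<..s} - {0..s}))"
      by (rule negligible_subset[of "{0}"]) auto
    have ci: "(\<lambda>_. p_inf) integrable_on {0<..s}"
      using integrable_spike_set_eq[OF neg] integrable_const_ivl by blast
    have "(\<lambda>\<tau>. p \<tau> S) integrable_on {0<..s}"
      by (rule measurable_bounded_by_integrable_imp_integrable_real[OF _ ci])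
         (auto intro!: continuous_imp_measurable_on_sets_lebesgue continuous_on_subset[OF pcont] 
           simp: pb abs_of_nonneg)
    then show ?thesis using integrable_spike_set_eq[OF neg] by blast
  qed
  have intab: "(\<lambda>\<tau>. p \<tau> S) integrable_on {a..b}" if "0 \<le> a" for S a b
    by (rule integrable_on_subinterval[OF intp[of S b]]) (use that in auto)
  define I where "I S s = integral {0..s} (\<lambda>\<tau>. p \<tau> S)" for S s
  have I0: "0 \<le> I S s" for S s
    unfolding I_def by (rule integral_nonneg[OF intp]) (auto intro: pb)
  have Iinc: "0 \<le> I S b - I S a \<and> I S b - I S a \<le> p_inf * (b - a)"
    if "0 \<le> a" "a \<le> b" for S a b
  proof -
    have "I S b = I S a + integral {a..b} (\<lambda>\<tau>. p \<tau> S)"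
      unfolding I_def using Henstock_Kurzweil_Integration.integral_combine[OF that intp] by simp
    moreover have "0 \<le> integral {a..b} (\<lambda>\<tau>. p \<tau> S)"
      by (rule integral_nonneg) (use intab that in \<open>auto intro!: pb\<close>)
    moreover have "integral {a..b} (\<lambda>\<tau>. p \<tau> S) \<le> integral {a..b} (\<lambda>_. p_inf)"
      by (rule integral_le) (use intab that in \<open>auto intro!: pb\<close>)
    ultimately show ?thesis using that by (simp add: mult.commute)
  qed
  have Ilow: "p_star * (s - s_star) \<le> I S s" if "0 \<le> s" for S s
  proof (cases "s \<le> s_star")
    case True
    then have "p_star * (s - s_star) \<le> 0" using ps by (simp add: mult_nonneg_nonpos)
    then show ?thesis using I0[of S s] by linarith
  next
    case False
    let ?g = "\<lambda>\<tau>. if \<tau> = s_star then p_star else p \<tau> S"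
    have int1: "(\<lambda>\<tau>. p \<tau> S) integrable_on {s_star..s}"
      using intab ss by simp
    have int2: "?g integrable_on {s_star..s}"
      by (rule integrable_spike[OF int1, of "{s_star}"]) auto
    have "integral {s_star..s} (\<lambda>_. p_star) \<le> integral {s_star..s} ?g"
      by (rule integral_le[OF _ int2]) (auto intro: pb2)
    also have "\<dots> = integral {s_star..s} (\<lambda>\<tau>. p \<tau> S)"
      by (rule integral_spike[of "{s_star}"]) auto
    finally have "p_star * (s - s_star) \<le> I S s - I S s_star"
      unfolding I_def using Henstock_Kurzweil_Integration.integral_combine[of 0 s_star s "\<lambda>\<tau>. p \<tau> S"] ss False intp
      by (simp add: mult.commute)
    then show ?thesis using I0[of S s_star] by linarith
  qed
  have ILip: "\<bar>I S s - I S' s\<bar> \<le> M * \<bar>S - S'\<bar> * s" if "0 \<le> s" for S S' s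
  proof -
    let ?h = "\<lambda>\<tau>. if \<tau> = 0 then 0 else p \<tau> S - p \<tau> S'"
    have int1: "(\<lambda>\<tau>. p \<tau> S - p \<tau> S') integrable_on {0..s}"
      by (rule integrable_diff[OF intp intp])
    have int2: "?h integrable_on {0..s}"
      by (rule integrable_spike[OF int1, of "{0}"]) auto
    have "I S s - I S' s = integral {0..s} (\<lambda>\<tau>. p \<tau> S - p \<tau> S')"
      unfolding I_def by (rule integral_diff[OF intp intp, symmetric])
    also have "\<dots> = integral {0..s} ?h"
      by (rule integral_spike[of "{0}"]) auto
    finally have "\<bar>I S s - I S' s\<bar> \<le> integral {0..s} (\<lambda>_. M * \<bar>S - S'\<bar>)"
      using integral_norm_bound_integral[OF int2 integrable_const_ivl, of "M * \<bar>S - S'\<bar>"]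
      by (auto simp: plipS M0)
    then show ?thesis using that by (simp add: mult_ac)
  qed
  have Izero: "I S 0 = 0" for S unfolding I_def by simp
  define C where "C = exp (p_star * s_star)"
  have C0: "C > 0" by (simp add: C_def)
  define E where "E S s = exp (- I S s)" for S s
  define J where "J S = integral {0..} (E S)" for S
  have Fm: "Fmap p S = inverse (J S)" for S unfolding Fmap_def J_def E_def[abs_def] I_def by simp
  have Icont: "continuous_on {0..} (I S)" for S
  proof (rule lipschitz_on_continuous_on)
    show "p_inf-lipschitz_on {0..} (I S)"
    proof (rule lipschitz_onI)
      fix x y :: real assume "x \<in> {0..}" "y \<in> {0..}"
      then show "dist (I S x) (I S y) \<le> p_inf * dist x y"
        using Iinc[of x y S] Iinc[of y x S] by (cases "x \<le> y") (auto simp: dist_real_def)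
    qed (use pinf in simp)
  qed
  have Econt: "continuous_on {0..} (E S)" for S
    unfolding E_def by (intro continuous_intros Icont)
  have Eup: "E S s \<le> C * exp (- p_star * s)" if "0 \<le> s" for S s
  proof -
    have "E S s \<le> exp (- (p_star * (s - s_star)))"
      unfolding E_def using Ilow[OF that, of S] by simp
    also have "\<dots> = C * exp (- p_star * s)"
      by (simp add: C_def exp_add[symmetric] algebra_simps)
    finally show ?thesis .
  qed
  have Elow: "exp (- p_inf * s) \<le> E S s" if "0 \<le> s" for S s
    unfolding E_def using Iinc[of 0 s S] that Izero by simp
  have E0: "0 \<le> E S s" for S s by (simp add: E_def)
  have intg: "(\<lambda>s. C * exp (- p_star * s)) integrable_on {0..}"
    by (rule integrable_on_mult_right[OF integrable_on_exp_minus_to_infinity]) (use ps in simp)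
  have intE: "E S integrable_on {0..}" for S
    by (rule measurable_bounded_by_integrable_imp_integrable_real[OF _ intg])
       (use Eup in \<open>auto intro!: continuous_imp_measurable_on_sets_lebesgue Econt simp: E0 abs_of_nonneg\<close>)
  have Jlow: "1 / p_inf \<le> J S" for S
  proof -
    have "integral {0..} (\<lambda>s. exp (- p_inf * s)) = 1 / p_inf"
      using integral_unique[OF has_integral_exp_minus_to_infinity[OF pinf, of 0]] by simp
    moreover have "integral {0..} (\<lambda>s. exp (- p_inf * s)) \<le> J S"
      unfolding J_def
      by (rule integral_le[OF integrable_on_exp_minus_to_infinity intE]) (use pinf Elow in auto)
    ultimately show ?thesis by simp
  qed
  have Jpos: "J S > 0" for S using Jlow[of S] pinf by (smt (verit) divide_pos_pos)
  have Finv: "\<bar>inverse (J S)\<bar> \<le> p_inf" for S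
  proof -
    have "inverse (J S) \<le> inverse (1 / p_inf)"
      using Jlow[of S] pinf by (intro le_imp_inverse_le) auto
    then show ?thesis using Jpos[of S] by simp
  qed
  define K where "K = C * M * (2 / p_star) * (2 / p_star)"
  have Jdiff: "\<bar>J S - J S'\<bar> \<le> K * \<bar>S - S'\<bar>" for S S'
  proof -
    define D where "D = C * M * \<bar>S - S'\<bar> * (2 / p_star)"
    have pw: "\<bar>E S s - E S' s\<bar> \<le> D * exp (- (p_star / 2) * s)" if "0 \<le> s" for s
    proof -
      have "\<bar>E S s - E S' s\<bar> \<le> exp (- min (I S s) (I S' s)) * \<bar>I S s - I S' s\<bar>"
        unfolding E_def by (rule exp_diff_bound)
      also have "\<dots> \<le> (C * exp (- p_star * s)) * (M * \<bar>S - S'\<bar> * s)"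
      proof (rule mult_mono)
        show "exp (- min (I S s) (I S' s)) \<le> C * exp (- p_star * s)"
          using Eup[OF that, of S] Eup[OF that, of S'] unfolding E_def
          by (simp add: min_def)
      qed (use ILip[OF that] C0 in auto)
      also have "\<dots> = C * M * \<bar>S - S'\<bar> * (s * exp (- p_star * s))"
        by (simp add: mult_ac)
      also have "\<dots> \<le> C * M * \<bar>S - S'\<bar> * ((2 / p_star) * exp (- (p_star/2) * s))"
        by (rule mult_left_mono[OF s_exp_bound[OF ps]]) (use C0 M0 in simp)
      finally show ?thesis by (simp add: D_def mult_ac)
    qed
    have int2: "(\<lambda>s. D * exp (- (p_star / 2) * s)) integrable_on {0..}"
      by (rule integrable_on_mult_right[OF integrable_on_exp_minus_to_infinity]) (use ps in simp)
    have "\<bar>J S - J S'\<bar> = \<bar>integral {0..} (\<lambda>s. E S s - E S' s)\<bar>"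
      unfolding J_def by (simp add: integral_diff[OF intE intE])
    also have "\<dots> \<le> integral {0..} (\<lambda>s. D * exp (- (p_star / 2) * s))"
      using integral_norm_bound_integral[OF integrable_diff[OF intE intE] int2] pw by simp
    also have "\<dots> = D * (2 / p_star)"
      using integral_unique[OF has_integral_exp_minus_to_infinity[of "p_star/2" 0]] ps by simp
    also have "\<dots> = K * \<bar>S - S'\<bar>" by (simp add: D_def K_def mult_ac)
    finally show ?thesis .
  qed
  have bnd: "bounded (range (Fmap p))"
    unfolding bounded_iff using Finv Fm by auto
  have K0: "K \<ge> 0" using C0 M0 ps by (simp add: K_def)
  have "(p_inf * p_inf * K)-lipschitz_on UNIV (Fmap p)"
  proof (rule lipschitz_onI)
    fix x y :: real
    have "dist (Fmap p x) (Fmap p y) = \<bar>inverse (J x)\<bar> * \<bar>J y - J x\<bar> * \<bar>inverse (J y)\<bar>"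
      using Jpos[of x] Jpos[of y] unfolding Fm dist_real_def
      by (simp add: inverse_diff_inverse abs_mult)
    also have "\<dots> \<le> p_inf * (K * \<bar>x - y\<bar>) * p_inf"
      using Finv Jdiff[of y x] pinf
      by (intro mult_mono) (auto simp: abs_minus_commute)
    finally show "dist (Fmap p x) (Fmap p y) \<le> p_inf * p_inf * K * dist x y"
      by (simp add: dist_real_def mult_ac)
  qed (use K0 in simp)
  then show ?thesis using bnd by blast
qed

end
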